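(* For every $k\in\mathbb Z_+$ and $y\in T$, the map $E$ defines a bounded map from $S^2_{k,y}(U)$ to $S^2_{k,y}(\tilde U)$, with norm bounded uniformly in $y\in T$.
   Context: $U\subset\mathbb R^p$, $U'\subset\mathbb R^k$, $T\subset\mathbb R^q$ are open neighborhoods of the origin, $\tilde U=U\times U'\subset\mathbb R^N$, $N=p+k$. $X_1,\dots,X_d$ are smooth vector fields on $U\times T$ of the form $\sum_lX_i^l(x,y)\partial_{x_l}$, viewed as smooth families $\{X_{i,y}\}$ on $U$, and $\tilde X_i(x,x',y)=X_i(x,y)+\sum_{j=1}^ku_{ij}(x,x',y)\partial_{x'_j}$ are smooth vector fields on $\tilde U\times T$ (families $\{\tilde X_{i,y}\}$ on $\tilde U$) that at each point are free of order $m$ (their basic commutators $\operatorname{ad}\tilde X_{i_1}\cdots\operatorname{ad}\tilde X_{i_{r-1}}\tilde X_{i_r}$ of order $\le m$ span a space of dimension $\dim\mathfrak g_{d,m}=N$, $\mathfrak g_{d,m}$ the free nilpotent Lie algebra of step $m$ on $d$ generators) and span $\mathbb R^N$. Fix a basis of $\mathbb R^N$ at each point consisting of such commutators $\tilde X_{jk,y}$ (chosen via fixed index tuples, $\tilde X_{j1,y}=\tilde X_{j,y}$), and let $dv_y$ be the volume form of the Riemannian metric on $\tilde U$ making it orthonormal. For a tuple $I=(i_1,\dots,i_r)$ put $X_{I,y}=X_{i_1,y}\cdots X_{i_r,y}$, $\tilde X_{I,y}=\tilde X_{i_1,y}\cdots\tilde X_{i_r,y}$. $S^2_{k,y}(U)=\{f\in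 L^2(U):X_{I,y}f\in L^2(U),|I|\le k\}$ with norm $\sum_{|I|\le k}\|X_{I,y}f\|_{L^2}$ (Lebesgue measure), and $S^2_{k,y}(\tilde U)$ analogously with $\tilde X_{I,y}$ and $L^2(\tilde U,dv_y)$. $E:C^\infty(\overline U)\to C^\infty(\overline{\tilde U})$ is $Ef(x,x')=f(x)$. *)

theory Defs
  imports "HOL-Analysis.Analysis" "HOL-Computational_Algebra.Squarefree"
begin

fun pderivs :: "('a::euclidean_space \<Rightarrow> 'b::real_normed_vector) \<Rightarrow> 'a list \<Rightarrow> 'a \<Rightarrow> 'b" where
  "pderivs f [] = f"
| "pderivs f (b # bs) = (\<lambda>z. frechet_derivative (pderivs f bs) (at z) b)"

definition smooth_on :: "'a::euclidean_space set \<Rightarrow> ('a \<Rightarrow> 'b::real_normed_vector) \<Rightarrow> bool" where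
  "smooth_on S f \<longleftrightarrow> open S \<and>
     (\<forall>bs. set bs \<subseteq> Basis \<longrightarrow> (\<forall>z\<in>S. pderivs f bs differentiable (at z)))"

definition vf_apply :: "('a::euclidean_space \<Rightarrow> 'a) \<Rightarrow> ('a \<Rightarrow> real) \<Rightarrow> 'a \<Rightarrow> real" where
  "vf_apply V g = (\<lambda>z. frechet_derivative g (at z) (V z))"

fun vf_word :: "(nat \<Rightarrow> 'a::euclidean_space \<Rightarrow> 'a) \<Rightarrow> nat list \<Rightarrow> ('a \<Rightarrow> real) \<Rightarrow> 'a \<Rightarrow> real" where
  "vf_word Xs [] g = g"
| "vf_word Xs (i # I) g = vf_apply (Xs i) (vf_word Xs I g)"

definition lie_bracket :: "('a::euclidean_space \<Rightarrow> 'a) \<Rightarrow> ('a \<Rightarrow> 'a) \<Rightarrow> 'a \<Rightarrow> 'a" where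
  "lie_bracket V W = (\<lambda>z. frechet_derivative W (at z) (V z) - frechet_derivative V (at z) (W z))"

fun commutator :: "(nat \<Rightarrow> 'a::euclidean_space \<Rightarrow> 'a) \<Rightarrow> nat list \<Rightarrow> 'a \<Rightarrow> 'a" where
  "commutator Xs [] = (\<lambda>z. 0)"
| "commutator Xs [i] = Xs i"
| "commutator Xs (i # j # J) = lie_bracket (Xs i) (commutator Xs (j # J))"

definition tuples_upto :: "nat \<Rightarrow> nat \<Rightarrow> nat list set" where
  "tuples_upto d m = {J. J \<noteq> [] \<and> set J \<subseteq> {..<d} \<and> length J \<le> m}"

definition words_upto :: "nat \<Rightarrow> nat \<Rightarrow> nat list set" where
  "words_upto d k = {I. set I \<subseteq> {..<d} \<and> length I \<le> k}"

section \<open>Dimension of the free nilpotent Lie algebra g_{d,m} (Witt's formula)\<close>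

definition moebius :: "nat \<Rightarrow> int" where
  "moebius n = (if squarefree n then (-1) ^ card (prime_factors n) else 0)"

definition free_nilpotent_dim :: "nat \<Rightarrow> nat \<Rightarrow> int" where
  "free_nilpotent_dim d m =
     (\<Sum>r\<in>{1..m}. (\<Sum>s\<in>{s. s dvd r}. moebius s * int d ^ (r div s)) div int r)"

text \<open>Membership in S^2_k for a weight rho (density of the measure w.r.t. Lebesgue).\<close>
definition S2_mem :: "(nat \<Rightarrow> 'a::euclidean_space \<Rightarrow> 'a) \<Rightarrow> nat \<Rightarrow> nat \<Rightarrow> 'a set
                       \<Rightarrow> ('a \<Rightarrow> real) \<Rightarrow> ('a \<Rightarrow> real) \<Rightarrow> bool" where
  "S2_mem Xs d k S rho g \<longleftrightarrow>
     (\<forall>I\<in>words_upto d k. set_integrable lborel S (\<lambda>z. (vf_word Xs I g z)\<^sup>2 * rho z))"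

definition S2_norm :: "(nat \<Rightarrow> 'a::euclidean_space \<Rightarrow> 'a) \<Rightarrow> nat \<Rightarrow> nat \<Rightarrow> 'a set
                       \<Rightarrow> ('a \<Rightarrow> real) \<Rightarrow> ('a \<Rightarrow> real) \<Rightarrow> real" where
  "S2_norm Xs d k S rho g =
     (\<Sum>I\<in>words_upto d k. sqrt (LINT z:S|lborel. (vf_word Xs I g z)\<^sup>2 * rho z))"

definition proj_x :: "real^('p::finite + 'k::finite) \<Rightarrow> real^'p" where
  "proj_x z = (\<chi> l. z $ Inl l)"

definition proj_x' :: "real^('p::finite + 'k::finite) \<Rightarrow> real^'k" where
  "proj_x' z = (\<chi> j. z $ Inr j)"

text \<open>Lifted vector field  tilde X_i = X_i(x,y) + sum_j u_ij(x,x',y) d/dx'_j.\<close>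
definition lift_field :: "(real^'p \<Rightarrow> real^'q \<Rightarrow> real^'p) \<Rightarrow> (real^('p::finite + 'k::finite) \<Rightarrow> real^'q::finite \<Rightarrow> real^'k)
      \<Rightarrow> real^'q \<Rightarrow> real^('p + 'k) \<Rightarrow> real^('p + 'k)" where
  "lift_field X u y z = (\<chi> r. case r of Inl l \<Rightarrow> X (proj_x z) y $ l | Inr j \<Rightarrow> u z y $ j)"

definition ext_op :: "(real^'p \<Rightarrow> real) \<Rightarrow> real^('p::finite + 'k::finite) \<Rightarrow> real" where
  "ext_op f z = f (proj_x z)"

text \<open>Matrix whose columns are the chosen basis commutators at z; the density of dv_y
  (volume of the metric making these columns orthonormal) is 1/|det|.\<close>
definition frame_matrix :: "(nat \<Rightarrow> real^'n::finite \<Rightarrow> real^'n) \<Rightarrow> ('n \<Rightarrow> nat list) \<Rightarrow> real^'n \<Rightarrow> real^'n^'n" where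
  "frame_matrix Xs Js z = (\<chi> r c. commutator Xs (Js c) z $ r)"

definition frame_density :: "(nat \<Rightarrow> real^'n::finite \<Rightarrow> real^'n) \<Rightarrow> ('n \<Rightarrow> nat list) \<Rightarrow> real^'n \<Rightarrow> real" where
  "frame_density Xs Js z = 1 / \<bar>det (frame_matrix Xs Js z)\<bar>"

end

theory Submission
  imports Defs
begin

lemma pderivs_append: "pderivs f (bs @ [b]) = pderivs (pderivs f [b]) bs"
  by (induction bs) auto

lemma fd_cong:
  assumes "open S" "z \<in> S" "\<And>x. x \<in> S \<Longrightarrow> f x = g x"
  shows "frechet_derivative f (at z) = frechet_derivative g (at z)"
proof -
  have "(\<lambda>D. (f has_derivative D) (at z)) = (\<lambda>D. (g has_derivative D) (at z))"
  proof (rule ext, rule iffI)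
    fix D assume "(f has_derivative D) (at z)"
    then show "(g has_derivative D) (at z)"
      using has_derivative_transform_within_open[of f D z UNIV S g] assms by auto
  next
    fix D assume "(g has_derivative D) (at z)"
    then show "(f has_derivative D) (at z)"
      using has_derivative_transform_within_open[of g D z UNIV S f] assms by auto
  qed
  then show ?thesis unfolding frechet_derivative_def by simp
qed

lemma differentiable_cong:
  assumes "open S" "z \<in> S" "\<And>x. x \<in> S \<Longrightarrow> f x = g x" "g differentiable (at z)"
  shows "f differentiable (at z)"
  using assms has_derivative_transform_within_open[of g _ z UNIV S f]
  unfolding differentiable_def by auto

lemma smooth_coinduct:
  fixes P :: "('a::euclidean_space \<Rightarrow> 'b::real_normed_vector) \<Rightarrow> bool"
  assumes "open S" "P f"
    and step: "\<And>g. P g \<Longrightarrow> (\<forall>z\<in>S. g differentiable (at z)) \<and> (\<forall>b\<in>Basis. P (\<lambda>z. frechet_derivative g (at z) b))"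
  shows "smooth_on S f"
proof -
  have "set bs \<subseteq> Basis \<Longrightarrow> P (pderivs f bs)" for bs
    by (induction bs) (use assms in auto)
  then show ?thesis unfolding smooth_on_def using assms step by blast
qed

lemma smooth_coinduct_cong:
  fixes P :: "('a::euclidean_space \<Rightarrow> 'b::real_normed_vector) \<Rightarrow> bool"
  assumes "open S" "P h" "\<And>z. z \<in> S \<Longrightarrow> f z = h z"
    and step: "\<And>g. P g \<Longrightarrow> (\<forall>z\<in>S. g differentiable (at z)) \<and>
        (\<forall>b\<in>Basis. \<exists>h. P h \<and> (\<forall>z\<in>S. frechet_derivative g (at z) b = h z))"
  shows "smooth_on S f"
proof (rule smooth_coinduct[where P="\<lambda>g. \<exists>h. P h \<and> (\<forall>z\<in>S. g z = h z)"])
  show "open S" by fact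
  show "\<exists>h. P h \<and> (\<forall>z\<in>S. f z = h z)" using assms by blast
next
  fix g assume "\<exists>h. P h \<and> (\<forall>z\<in>S. g z = h z)"
  then obtain h where h: "P h" "\<forall>z\<in>S. g z = h z" by blast
  note st = step[OF h(1)]
  show "(\<forall>z\<in>S. g differentiable (at z)) \<and>
        (\<forall>b\<in>Basis. \<exists>h. P h \<and> (\<forall>z\<in>S. frechet_derivative g (at z) b = h z))"
  proof (intro conjI ballI)
    fix z assume "z \<in> S"
    then show "g differentiable (at z)"
      using differentiable_cong[OF \<open>open S\<close> \<open>z \<in> S\<close>, of g h] h st by auto
  next
    fix b :: 'a assume b: "b \<in> Basis"
    then obtain h' where h': "P h'" "\<forall>z\<in>S. frechet_derivative h (at z) b = h' z" using st by blast
    have "\<forall>z\<in>S. frechet_derivative g (at z) b = h' z"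
      using fd_cong[OF \<open>open S\<close>, of _ g h] h h' by auto
    then show "\<exists>h. P h \<and> (\<forall>z\<in>S. frechet_derivative g (at z) b = h z)" using h' by blast
  qed
qed

lemma smooth_onD:
  assumes "smooth_on S f"
  shows "open S" "\<And>z. z \<in> S \<Longrightarrow> f differentiable (at z)"
    "\<And>b. b \<in> Basis \<Longrightarrow> smooth_on S (\<lambda>z. frechet_derivative f (at z) b)"
proof -
  show "open S" using assms unfolding smooth_on_def by blast
  show "\<And>z. z \<in> S \<Longrightarrow> f differentiable (at z)"
    using assms unfolding smooth_on_def by (metis empty_subsetI list.set(1) pderivs.simps(1))
  fix b :: 'a assume b: "b \<in> Basis"
  have "pderivs (\<lambda>z. frechet_derivative f (at z) b) bs = pderivs f (bs @ [b])" for bs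
    by (simp add: pderivs_append)
  then show "smooth_on S (\<lambda>z. frechet_derivative f (at z) b)"
    using assms b unfolding smooth_on_def by auto
qed

lemma smooth_on_cong:
  assumes "smooth_on S h" "\<And>z. z \<in> S \<Longrightarrow> f z = h z"
  shows "smooth_on S f"
proof (rule smooth_coinduct_cong[where P="smooth_on S", OF smooth_onD(1)[OF assms(1)] assms])
  fix g assume g: "smooth_on S g"
  show "(\<forall>z\<in>S. g differentiable (at z)) \<and>
        (\<forall>b\<in>Basis. \<exists>h. smooth_on S h \<and> (\<forall>z\<in>S. frechet_derivative g (at z) b = h z))"
    using smooth_onD(2,3)[OF g] by blast
qed

lemma smooth_on_subset:
  assumes "smooth_on S f" "open T" "T \<subseteq> S"
  shows "smooth_on T f"
  using assms unfolding smooth_on_def by blast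

lemma smooth_on_const:
  assumes "open S"
  shows "smooth_on S (\<lambda>_. c)"
proof (rule smooth_coinduct[where P="\<lambda>g. \<exists>c. g = (\<lambda>_. c)"])
  fix g :: "'a \<Rightarrow> 'b" assume "\<exists>c. g = (\<lambda>_. c)"
  then obtain c where c: "g = (\<lambda>_. c)" by blast
  have "frechet_derivative g (at z) = (\<lambda>_. 0)" for z
    unfolding c by (rule frechet_derivative_at[symmetric]) (rule has_derivative_const)
  then show "(\<forall>z\<in>S. g differentiable (at z)) \<and> (\<forall>b\<in>Basis. \<exists>c. (\<lambda>z. frechet_derivative g (at z) b) = (\<lambda>_. c))"
    using c by auto
qed (use assms in auto)

lemma fd_expand:
  fixes g :: "'a::euclidean_space \<Rightarrow> 'b::real_normed_vector"
  assumes "g differentiable (at y)"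
  shows "frechet_derivative g (at y) v = (\<Sum>b\<in>Basis. (v \<bullet> b) *\<^sub>R frechet_derivative g (at y) b)"
proof -
  have lin: "linear (frechet_derivative g (at y))" by (rule linear_frechet_derivative[OF assms])
  have "frechet_derivative g (at y) v = frechet_derivative g (at y) (\<Sum>b\<in>Basis. (v \<bullet> b) *\<^sub>R b)"
    by (simp add: euclidean_representation)
  also have "\<dots> = (\<Sum>b\<in>Basis. (v \<bullet> b) *\<^sub>R frechet_derivative g (at y) b)"
    using lin by (simp add: linear_sum linear_scale)
  finally show ?thesis .
qed

definition sprod :: "(('a \<Rightarrow> real) \<times> ('a \<Rightarrow> real)) list \<Rightarrow> 'a \<Rightarrow> real" where
  "sprod ps = (\<lambda>z. (\<Sum>p\<leftarrow>ps. fst p z * snd p z))"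

definition sprod_d :: "'a::euclidean_space \<Rightarrow> (('a \<Rightarrow> real) \<times> ('a \<Rightarrow> real)) list \<Rightarrow> (('a \<Rightarrow> real) \<times> ('a \<Rightarrow> real)) list" where
  "sprod_d b ps = concat (map (\<lambda>p. [((\<lambda>z. frechet_derivative (fst p) (at z) b), snd p),
                                     (fst p, (\<lambda>z. frechet_derivative (snd p) (at z) b))]) ps)"

lemma sprod_has_derivative:
  assumes "\<forall>p\<in>set ps. fst p differentiable (at z) \<and> snd p differentiable (at z)"
  shows "(sprod ps has_derivative (\<lambda>v. (\<Sum>p\<leftarrow>ps. frechet_derivative (fst p) (at z) v * snd p z
             + fst p z * frechet_derivative (snd p) (at z) v))) (at z)"
  using assms
proof (induction ps)
  case Nil
  then show ?case by (simp add: sprod_def)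
next
  case (Cons p ps)
  have d1: "(fst p has_derivative frechet_derivative (fst p) (at z)) (at z)"
    and d2: "(snd p has_derivative frechet_derivative (snd p) (at z)) (at z)"
    using Cons.prems frechet_derivative_works by auto
  have "((\<lambda>x. fst p x * snd p x) has_derivative
          (\<lambda>v. fst p z * frechet_derivative (snd p) (at z) v + frechet_derivative (fst p) (at z) v * snd p z)) (at z)"
    by (rule has_derivative_mult[OF d1 d2])
  from has_derivative_add[OF this Cons.IH] Cons.prems show ?case
    by (simp add: sprod_def algebra_simps)
qed

lemma sprod_d_eq:
  assumes "\<forall>p\<in>set ps. fst p differentiable (at z) \<and> snd p differentiable (at z)"
  shows "frechet_derivative (sprod ps) (at z) b = sprod (sprod_d b ps) z"
proof -
  have "frechet_derivative (sprod ps) (at z) b = (\<Sum>p\<leftarrow>ps. frechet_derivative (fst p) (at z) b * snd p z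
             + fst p z * frechet_derivative (snd p) (at z) b)"
    using fun_cong[OF frechet_derivative_at[OF sprod_has_derivative[OF assms]], of b] by simp
  also have "\<dots> = sprod (sprod_d b ps) z"
    unfolding sprod_def sprod_d_def by (induction ps) auto
  finally show ?thesis .
qed

lemma smooth_on_sprod:
  fixes ps :: "(('a::euclidean_space \<Rightarrow> real) \<times> ('a \<Rightarrow> real)) list"
  assumes "open S" "\<forall>p\<in>set ps. smooth_on S (fst p) \<and> smooth_on S (snd p)"
  shows "smooth_on S (sprod ps)"
proof (rule smooth_coinduct_cong[where P="\<lambda>g. \<exists>ps. g = sprod ps \<and> (\<forall>p\<in>set ps. smooth_on S (fst p) \<and> smooth_on S (snd p))"])
  fix g assume "\<exists>ps. g = sprod ps \<and> (\<forall>p\<in>set ps. smooth_on S (fst p) \<and> smooth_on S (snd p))"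
  then obtain ps where g: "g = sprod ps" and ps: "\<forall>p\<in>set ps. smooth_on S (fst p) \<and> smooth_on S (snd p)" by blast
  have diff: "\<forall>p\<in>set ps. fst p differentiable (at z) \<and> snd p differentiable (at z)" if "z \<in> S" for z
    using ps smooth_onD(2) that by blast
  have "\<forall>z\<in>S. g differentiable (at z)"
    using sprod_has_derivative[OF diff] g unfolding differentiable_def by blast
  moreover have "\<forall>b\<in>Basis. \<exists>h. (\<exists>ps. h = sprod ps \<and>
                    (\<forall>p\<in>set ps. smooth_on S (fst p) \<and> smooth_on S (snd p))) \<and>
                    (\<forall>z\<in>S. frechet_derivative g (at z) b = h z)"
  proof
    fix b :: 'a assume b: "b \<in> Basis"
    have "\<forall>p\<in>set (sprod_d b ps). smooth_on S (fst p) \<and> smooth_on S (snd p)"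
      using ps b smooth_onD(3) unfolding sprod_d_def by auto
    moreover have "\<forall>z\<in>S. frechet_derivative g (at z) b = sprod (sprod_d b ps) z"
      using sprod_d_eq diff g by blast
    ultimately show "\<exists>h. (\<exists>ps. h = sprod ps \<and>
                    (\<forall>p\<in>set ps. smooth_on S (fst p) \<and> smooth_on S (snd p))) \<and>
                    (\<forall>z\<in>S. frechet_derivative g (at z) b = h z)" by blast
  qed
  ultimately show "(\<forall>z\<in>S. g differentiable (at z)) \<and> (\<forall>b\<in>Basis. \<exists>h. (\<exists>ps. h = sprod ps \<and>
                    (\<forall>p\<in>set ps. smooth_on S (fst p) \<and> smooth_on S (snd p))) \<and>
                    (\<forall>z\<in>S. frechet_derivative g (at z) b = h z))" by blast
qed (use assms in auto)

lemma smooth_on_mult: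
  fixes f g :: "'a::euclidean_space \<Rightarrow> real"
  assumes "smooth_on S f" "smooth_on S g"
  shows "smooth_on S (\<lambda>z. f z * g z)"
proof -
  have "smooth_on S (sprod [(f,g)])" by (rule smooth_on_sprod) (use assms smooth_onD(1) in auto)
  then show ?thesis by (simp add: sprod_def)
qed

lemma smooth_on_cmult:
  fixes f :: "'a::euclidean_space \<Rightarrow> real"
  assumes "smooth_on S f"
  shows "smooth_on S (\<lambda>z. c * f z)"
  using smooth_on_mult[OF smooth_on_const[OF smooth_onD(1)[OF assms]] assms] .

lemma smooth_on_add:
  fixes f g :: "'a::euclidean_space \<Rightarrow> real"
  assumes "smooth_on S f" "smooth_on S g"
  shows "smooth_on S (\<lambda>z. f z + g z)"
proof -
  have "smooth_on S (sprod [(f,\<lambda>_. 1),(g,\<lambda>_. 1)])"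
    by (rule smooth_on_sprod) (use assms smooth_onD(1) smooth_on_const in auto)
  then show ?thesis by (simp add: sprod_def)
qed

lemma smooth_on_sum:
  fixes F :: "'i \<Rightarrow> 'a::euclidean_space \<Rightarrow> real"
  assumes "open S" "\<And>i. i \<in> A \<Longrightarrow> smooth_on S (F i)"
  shows "smooth_on S (\<lambda>z. \<Sum>i\<in>A. F i z)"
  using assms
proof (induction A rule: infinite_finite_induct)
  case (infinite A)
  then show ?case using smooth_on_const by auto
next
  case empty
  then show ?case using smooth_on_const by auto
next
  case (insert x F)
  then show ?case by (simp add: smooth_on_add)
qed

lemma smooth_on_linear:
  fixes F :: "'a::euclidean_space \<Rightarrow> 'b::real_normed_vector" and L :: "'b \<Rightarrow> 'c::real_normed_vector"
  assumes L: "bounded_linear L" and F: "smooth_on S F"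
  shows "smooth_on S (\<lambda>z. L (F z))"
proof (rule smooth_coinduct_cong[where P="\<lambda>g. \<exists>G. smooth_on S G \<and> g = (\<lambda>z. L (G z))"])
  show "open S" using smooth_onD(1)[OF F] .
  fix g assume "\<exists>G. smooth_on S G \<and> g = (\<lambda>z. L (G z))"
  then obtain G where G: "smooth_on S G" and g: "g = (\<lambda>z. L (G z))" by blast
  have der: "(g has_derivative (\<lambda>v. L (frechet_derivative G (at z) v))) (at z)" if "z \<in> S" for z
    unfolding g by (rule bounded_linear.has_derivative[OF L]) (use smooth_onD(2)[OF G that] frechet_derivative_works in blast)
  show "(\<forall>z\<in>S. g differentiable (at z)) \<and>
        (\<forall>b\<in>Basis. \<exists>h. (\<exists>G. smooth_on S G \<and> h = (\<lambda>z. L (G z))) \<and> (\<forall>z\<in>S. frechet_derivative g (at z) b = h z))"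
  proof (intro conjI ballI)
    fix z assume "z \<in> S" then show "g differentiable (at z)" using der unfolding differentiable_def by blast
  next
    fix b :: 'a assume b: "b \<in> Basis"
    have "\<forall>z\<in>S. frechet_derivative g (at z) b = L (frechet_derivative G (at z) b)"
      using der frechet_derivative_at by metis
    then show "\<exists>h. (\<exists>G. smooth_on S G \<and> h = (\<lambda>z. L (G z))) \<and> (\<forall>z\<in>S. frechet_derivative g (at z) b = h z)"
      using smooth_onD(3)[OF G b] by blast
  qed
qed (use F in auto)

lemma smooth_on_affine:
  fixes G :: "'c::euclidean_space \<Rightarrow> real" and L :: "'a::euclidean_space \<Rightarrow> 'c"
  assumes L: "bounded_linear L" and G: "smooth_on S G"
  shows "smooth_on {x. L x + c \<in> S} (\<lambda>x. G (L x + c))"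
proof -
  let ?S' = "{x. L x + c \<in> S}"
  have cont: "continuous_on UNIV (\<lambda>x. L x + c)"
    by (intro continuous_intros linear_continuous_on L)
  have op: "open ?S'"
    using open_vimage[OF smooth_onD(1)[OF G] cont] by (simp add: vimage_def)
  have dA: "((\<lambda>x. L x + c) has_derivative L) (at x)" for x
    using bounded_linear.has_derivative[OF L has_derivative_ident] has_derivative_add_const by blast
  show ?thesis
  proof (rule smooth_coinduct_cong[where P="\<lambda>g. \<exists>G. smooth_on S G \<and> g = (\<lambda>x. G (L x + c))"])
    fix g :: "'a \<Rightarrow> real" assume "\<exists>G. smooth_on S G \<and> g = (\<lambda>x. G (L x + c))"
    then obtain H where H: "smooth_on S H" and g: "g = (\<lambda>x. H (L x + c))" by blast
    have der: "(g has_derivative (\<lambda>v. frechet_derivative H (at (L x + c)) (L v))) (at x)" if "x \<in> ?S'" for x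
    proof -
      have "(H has_derivative frechet_derivative H (at (L x + c))) (at (L x + c))"
        using smooth_onD(2)[OF H] that frechet_derivative_works by blast
      from diff_chain_at[OF dA this] show ?thesis unfolding g by (simp add: o_def)
    qed
    show "(\<forall>z\<in>?S'. g differentiable (at z)) \<and>
        (\<forall>b\<in>Basis. \<exists>h. (\<exists>G. smooth_on S G \<and> h = (\<lambda>x. G (L x + c))) \<and> (\<forall>z\<in>?S'. frechet_derivative g (at z) b = h z))"
    proof (intro conjI ballI)
      fix z assume "z \<in> ?S'" then show "g differentiable (at z)" using der unfolding differentiable_def by blast
    next
      fix b :: 'a assume b: "b \<in> Basis"
      let ?H' = "\<lambda>y. \<Sum>e\<in>(Basis::'c set). (L b \<bullet> e) * frechet_derivative H (at y) e"
      have "smooth_on S ?H'"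
        by (rule smooth_on_sum) (auto intro!: smooth_on_cmult smooth_onD(3)[OF H] smooth_onD(1)[OF H])
      moreover have "\<forall>z\<in>?S'. frechet_derivative g (at z) b = ?H' (L z + c)"
      proof
        fix z assume z: "z \<in> ?S'"
        have "frechet_derivative g (at z) b = frechet_derivative H (at (L z + c)) (L b)"
          using der[OF z] frechet_derivative_at by metis
        also have "\<dots> = ?H' (L z + c)"
          using fd_expand[of H "L z + c" "L b"] smooth_onD(2)[OF H] z by simp
        finally show "frechet_derivative g (at z) b = ?H' (L z + c)" .
      qed
      ultimately show "\<exists>h. (\<exists>G. smooth_on S G \<and> h = (\<lambda>x. G (L x + c))) \<and> (\<forall>z\<in>?S'. frechet_derivative g (at z) b = h z)"
        by blast
    qed
  qed (use op G in auto)
qed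

lemma Pair_basis_in: "(e::'a::euclidean_space) \<in> Basis \<Longrightarrow> (e, 0::'c::euclidean_space) \<in> Basis"
  by (simp add: Basis_prod_def)

lemma pair_repr: "((v::'a::euclidean_space), (0::'c::euclidean_space)) = (\<Sum>e\<in>Basis. (v \<bullet> e) *\<^sub>R (e, 0))"
  by (simp add: prod_eq_iff fst_sum snd_sum euclidean_representation)

lemma slice_fd:
  fixes H :: "'a::euclidean_space \<times> 'c::euclidean_space \<Rightarrow> real"
  assumes H: "smooth_on W H" and zy: "(z, y) \<in> W"
  shows "(\<lambda>x. H (x, y)) differentiable (at z)"
    "frechet_derivative (\<lambda>x. H (x, y)) (at z) v = (\<Sum>e\<in>Basis. (v \<bullet> e) * frechet_derivative H (at (z, y)) (e, 0))"
proof -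
  have dA: "((\<lambda>x. (x, y)) has_derivative (\<lambda>v. (v, 0))) (at x)" for x
    by (auto intro!: derivative_eq_intros)
  have dH: "(H has_derivative frechet_derivative H (at (z,y))) (at (z, y))"
    using smooth_onD(2)[OF H zy] frechet_derivative_works by blast
  have d: "((\<lambda>x. H (x, y)) has_derivative (\<lambda>v. frechet_derivative H (at (z,y)) (v, 0))) (at z)"
    using diff_chain_at[OF dA dH] by (simp add: o_def)
  then show "(\<lambda>x. H (x, y)) differentiable (at z)" unfolding differentiable_def by blast
  have lin: "linear (frechet_derivative H (at (z,y)))"
    using linear_frechet_derivative smooth_onD(2)[OF H zy] by blast
  have "frechet_derivative (\<lambda>x. H (x, y)) (at z) v = frechet_derivative H (at (z,y)) (v, 0)"
    using fun_cong[OF frechet_derivative_at[OF d], of v] by simp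
  also have "\<dots> = frechet_derivative H (at (z,y)) (\<Sum>e\<in>Basis. (v \<bullet> e) *\<^sub>R (e, 0))"
    by (simp only: pair_repr[symmetric])
  also have "\<dots> = (\<Sum>e\<in>Basis. (v \<bullet> e) * frechet_derivative H (at (z, y)) (e, 0))"
    by (simp add: linear_sum[OF lin] linear_scale[OF lin] del: scaleR_Pair)
  finally show "frechet_derivative (\<lambda>x. H (x, y)) (at z) v = (\<Sum>e\<in>Basis. (v \<bullet> e) * frechet_derivative H (at (z, y)) (e, 0))" .
qed

lemma open_slice:
  assumes "open (W :: ('a::euclidean_space \<times> 'c::euclidean_space) set)"
  shows "open {x. (x, y) \<in> W}"
proof -
  have "continuous_on UNIV (\<lambda>x::'a. (x, y))" by (intro continuous_intros)
  from open_vimage[OF assms this] show ?thesis by (simp add: vimage_def)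
qed

lemma fd_component:
  fixes F :: "'a::euclidean_space \<Rightarrow> 'b::euclidean_space"
  assumes O: "open Op" "z \<in> Op"
    and eq: "\<And>x c. x \<in> Op \<Longrightarrow> c \<in> Basis \<Longrightarrow> F x \<bullet> c = HC c x"
    and dif: "\<And>c. c \<in> Basis \<Longrightarrow> HC c differentiable (at z)"
    and c: "c \<in> Basis"
  shows "frechet_derivative F (at z) v \<bullet> c = frechet_derivative (HC c) (at z) v"
proof -
  let ?K = "\<lambda>x. \<Sum>c\<in>Basis. HC c x *\<^sub>R c"
  have KF: "F x = ?K x" if "x \<in> Op" for x
    using eq[OF that] euclidean_representation[of "F x"] by (metis (no_types, lifting) sum.cong)
  have dK: "(?K has_derivative (\<lambda>v. \<Sum>c\<in>Basis. frechet_derivative (HC c) (at z) v *\<^sub>R c)) (at z)"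
    by (intro has_derivative_sum has_derivative_scaleR_left)
       (use dif frechet_derivative_works in blast)
  have "frechet_derivative F (at z) = frechet_derivative ?K (at z)"
    by (rule fd_cong[OF O]) (use KF in auto)
  also have "\<dots> = (\<lambda>v. \<Sum>c\<in>Basis. frechet_derivative (HC c) (at z) v *\<^sub>R c)"
    using frechet_derivative_at[OF dK] by simp
  finally show ?thesis using c by (simp add: inner_sum_left inner_Basis if_distrib cong: if_cong)
qed

lemma commutator_rep:
  fixes Y :: "'c::euclidean_space \<Rightarrow> nat \<Rightarrow> 'a::euclidean_space \<Rightarrow> 'a"
  assumes W: "open W"
    and Ys: "\<And>i b. i < d \<Longrightarrow> b \<in> Basis \<Longrightarrow> smooth_on W (\<lambda>w. Y (snd w) i (fst w) \<bullet> b)"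
  shows "J \<noteq> [] \<Longrightarrow> set J \<subseteq> {..<d} \<Longrightarrow>
     \<forall>b\<in>Basis. \<exists>H. smooth_on W H \<and> (\<forall>w\<in>W. commutator (Y (snd w)) J (fst w) \<bullet> b = H w)"
proof (induction J)
  case Nil
  then show ?case by simp
next
  case (Cons i J)
  have i: "i < d" using Cons.prems by auto
  show ?case
  proof (cases J)
    case Nil
    then show ?thesis using Ys[OF i] by auto
  next
    case (Cons j J')
    have IH: "\<forall>b\<in>Basis. \<exists>H. smooth_on W H \<and> (\<forall>w\<in>W. commutator (Y (snd w)) J (fst w) \<bullet> b = H w)"
      using Cons.IH Cons.prems Cons by auto
    then obtain HC where HC: "\<And>b. b \<in> Basis \<Longrightarrow> smooth_on W (HC b)"
      "\<And>b w. b \<in> Basis \<Longrightarrow> w \<in> W \<Longrightarrow> commutator (Y (snd w)) J (fst w) \<bullet> b = HC b w"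
      by metis
    define G where "G = (\<lambda>b w. Y (snd w) i (fst w) \<bullet> b)"
    have G: "\<And>b. b \<in> Basis \<Longrightarrow> smooth_on W (G b)" unfolding G_def using Ys[OF i] by blast
    define D where "D = (\<lambda>(H :: 'a \<times> 'c \<Rightarrow> real) e w. frechet_derivative H (at w) (e, 0::'c))"
    show ?thesis
    proof
      fix b :: 'a assume b: "b \<in> Basis"
      define Hn where "Hn = (\<lambda>w. (\<Sum>e\<in>Basis. G e w * D (HC b) e w) - (\<Sum>e\<in>Basis. HC e w * D (G b) e w))"
      have "smooth_on W Hn"
        unfolding Hn_def D_def
        apply (rule smooth_on_add[of _ _ "\<lambda>w. - (\<Sum>e\<in>Basis. HC e w * frechet_derivative (G b) (at w) (e, 0))", simplified])
        apply (rule smooth_on_sum[OF W])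
        apply (rule smooth_on_mult[OF G smooth_onD(3)[OF HC(1)]]; simp add: b Pair_basis_in)
        apply (rule smooth_on_cmult[of _ _ "-1", simplified])
        apply (rule smooth_on_sum[OF W])
        apply (rule smooth_on_mult[OF HC(1) smooth_onD(3)[OF G]]; simp add: b Pair_basis_in)
        done
      moreover have "commutator (Y (snd w)) (i # J) (fst w) \<bullet> b = Hn w" if w: "w \<in> W" for w
      proof -
        obtain z y where zy: "w = (z, y)" by fastforce
        have zyW: "(z, y) \<in> W" using w zy by simp
        let ?O = "{x. (x, y) \<in> W}"
        have O: "open ?O" "z \<in> ?O" using open_slice[OF W] zyW by auto
        let ?C = "commutator (Y y) J"
        have CJ: "commutator (Y y) (i # J) = lie_bracket (Y y i) ?C"
          using Cons by simp
        have t1: "frechet_derivative ?C (at z) (Y y i z) \<bullet> b = (\<Sum>e\<in>Basis. G e w * D (HC b) e w)"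
        proof -
          have "frechet_derivative ?C (at z) (Y y i z) \<bullet> b = frechet_derivative (\<lambda>x. HC b (x, y)) (at z) (Y y i z)"
          proof (rule fd_component[OF O _ _ b])
            show "?C x \<bullet> c = HC c (x, y)" if "x \<in> {x. (x, y) \<in> W}" "c \<in> Basis" for x c
              using HC(2)[of c "(x,y)"] that by simp
            show "(\<lambda>x. HC c (x, y)) differentiable (at z)" if "c \<in> Basis" for c
              by (rule slice_fd(1)[OF HC(1)[OF that] zyW])
          qed
          also have "\<dots> = (\<Sum>e\<in>Basis. G e w * D (HC b) e w)"
            using slice_fd(2)[OF HC(1)[OF b] zyW] by (simp add: zy G_def D_def)
          finally show ?thesis .
        qed
        have t2: "frechet_derivative (Y y i) (at z) (?C z) \<bullet> b = (\<Sum>e\<in>Basis. HC e w * D (G b) e w)"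
        proof -
          have "frechet_derivative (Y y i) (at z) (?C z) \<bullet> b = frechet_derivative (\<lambda>x. G b (x, y)) (at z) (?C z)"
          proof (rule fd_component[OF O _ _ b])
            show "Y y i x \<bullet> c = G c (x, y)" if "x \<in> {x. (x, y) \<in> W}" "c \<in> Basis" for x c
              by (simp add: G_def)
            show "(\<lambda>x. G c (x, y)) differentiable (at z)" if "c \<in> Basis" for c
              by (rule slice_fd(1)[OF G[OF that] zyW])
          qed
          also have "\<dots> = (\<Sum>e\<in>Basis. HC e w * D (G b) e w)"
            using slice_fd(2)[OF G[OF b] zyW] HC(2)[of _ "(z,y)"] zyW by (simp add: zy D_def)
          finally show ?thesis .
        qed
        show ?thesis using t1 t2 by (simp add: zy CJ lie_bracket_def inner_diff_left Hn_def)
      qed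
      ultimately show "\<exists>H. smooth_on W H \<and> (\<forall>w\<in>W. commutator (Y (snd w)) (i # J) (fst w) \<bullet> b = H w)"
        by blast
    qed
  qed
qed

lemma smooth_on_vf_apply:
  fixes V :: "'a::euclidean_space \<Rightarrow> 'a" and g :: "'a \<Rightarrow> real"
  assumes V: "\<And>b. b \<in> Basis \<Longrightarrow> smooth_on S (\<lambda>x. V x \<bullet> b)" and g: "smooth_on S g"
  shows "smooth_on S (vf_apply V g)"
proof (rule smooth_on_cong)
  show "smooth_on S (\<lambda>x. \<Sum>b\<in>Basis. (V x \<bullet> b) * frechet_derivative g (at x) b)"
    by (rule smooth_on_sum[OF smooth_onD(1)[OF g]], rule smooth_on_mult[OF V smooth_onD(3)[OF g]])
  show "vf_apply V g x = (\<Sum>b\<in>Basis. (V x \<bullet> b) * frechet_derivative g (at x) b)" if "x \<in> S" for x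
    unfolding vf_apply_def by (subst fd_expand[OF smooth_onD(2)[OF g that]]) simp
qed

lemma smooth_on_vf_word:
  fixes V :: "nat \<Rightarrow> 'a::euclidean_space \<Rightarrow> 'a" and g :: "'a \<Rightarrow> real"
  assumes V: "\<And>i b. i < d \<Longrightarrow> b \<in> Basis \<Longrightarrow> smooth_on S (\<lambda>x. V i x \<bullet> b)" and g: "smooth_on S g"
  shows "set I \<subseteq> {..<d} \<Longrightarrow> smooth_on S (vf_word V I g)"
proof (induction I)
  case Nil
  then show ?case using g by simp
next
  case (Cons i I)
  then show ?case using smooth_on_vf_apply[OF V] by auto
qed

lemma vf_word_pullback:
  fixes Vt :: "nat \<Rightarrow> 'a::euclidean_space \<Rightarrow> 'a" and V :: "nat \<Rightarrow> 'b::euclidean_space \<Rightarrow> 'b"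
    and P :: "'a \<Rightarrow> 'b" and g :: "'b \<Rightarrow> real"
  assumes P: "bounded_linear P" and S: "open S" and SO: "\<And>z. z \<in> S \<Longrightarrow> P z \<in> Op"
    and VV: "\<And>i z. i < d \<Longrightarrow> z \<in> S \<Longrightarrow> P (Vt i z) = V i (P z)"
    and V: "\<And>i b. i < d \<Longrightarrow> b \<in> Basis \<Longrightarrow> smooth_on Op (\<lambda>x. V i x \<bullet> b)" and g: "smooth_on Op g"
  shows "set I \<subseteq> {..<d} \<Longrightarrow> \<forall>z\<in>S. vf_word Vt I (\<lambda>z. g (P z)) z = vf_word V I g (P z)"
proof (induction I)
  case Nil
  then show ?case by simp
next
  case (Cons i I)
  have i: "i < d" and I: "set I \<subseteq> {..<d}" using Cons.prems by auto
  have IH: "\<forall>z\<in>S. vf_word Vt I (\<lambda>z. g (P z)) z = vf_word V I g (P z)" using Cons.IH I by blast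
  have sm: "smooth_on Op (vf_word V I g)" by (rule smooth_on_vf_word[OF V g I])
  show ?case
  proof
    fix z assume z: "z \<in> S"
    let ?h = "vf_word V I g"
    have "vf_word Vt (i # I) (\<lambda>z. g (P z)) z = frechet_derivative (vf_word Vt I (\<lambda>z. g (P z))) (at z) (Vt i z)"
      by (simp add: vf_apply_def)
    also have "\<dots> = frechet_derivative (\<lambda>z. ?h (P z)) (at z) (Vt i z)"
      using fd_cong[OF S z, of "vf_word Vt I (\<lambda>z. g (P z))" "\<lambda>z. ?h (P z)"] IH by simp
    also have "\<dots> = frechet_derivative ?h (at (P z)) (P (Vt i z))"
    proof -
      have dh: "(?h has_derivative frechet_derivative ?h (at (P z))) (at (P z))"
        using smooth_onD(2)[OF sm SO[OF z]] frechet_derivative_works by blast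
      have "((\<lambda>z. ?h (P z)) has_derivative (\<lambda>v. frechet_derivative ?h (at (P z)) (P v))) (at z)"
        using diff_chain_at[OF bounded_linear.has_derivative[OF P has_derivative_ident] dh] by (simp add: o_def)
      from fun_cong[OF frechet_derivative_at[OF this], of "Vt i z"] show ?thesis by simp
    qed
    also have "\<dots> = vf_word V (i # I) g (P z)"
      using VV[OF i z] by (simp add: vf_apply_def)
    finally show "vf_word Vt (i # I) (\<lambda>z. g (P z)) z = vf_word V (i # I) g (P z)" .
  qed
qed

lemma linear_proj_x: "bounded_linear (proj_x :: real^('p::finite + 'k::finite) \<Rightarrow> real^'p)"
  unfolding proj_x_def
  by (rule linear_conv_bounded_linear[THEN iffD1], rule linearI) (simp_all add: vec_eq_iff)

lemma linear_proj_x': "bounded_linear (proj_x' :: real^('p::finite + 'k::finite) \<Rightarrow> real^'k)"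
  unfolding proj_x'_def
  by (rule linear_conv_bounded_linear[THEN iffD1], rule linearI) (simp_all add: vec_eq_iff)

lemma prod_Basis_cart: "(\<Prod>b\<in>(Basis::(real^'n::finite) set). f b) = (\<Prod>i\<in>UNIV. f (axis i 1))"
proof -
  have B: "(Basis::(real^'n) set) = range (\<lambda>i. axis i 1)" by (auto simp: Basis_vec_def)
  have inj: "inj (\<lambda>i::'n. axis i (1::real))" by (auto intro!: injI simp: axis_eq_axis)
  show ?thesis unfolding B by (simp add: prod.reindex[OF inj])
qed

lemma prod_Basis_prod_eq:
  "(\<Prod>b\<in>(Basis::('a::euclidean_space \<times> 'b::euclidean_space) set). f b) =
     (\<Prod>i\<in>Basis. f (i, 0)) * (\<Prod>i\<in>Basis. f (0, i))"
proof -
  have i1: "inj_on (\<lambda>u. (u::'a, 0::'b)) Basis" and i2: "inj_on (\<lambda>u. (0::'a, u::'b)) Basis"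
    by (auto intro!: inj_onI)
  have disj: "(\<lambda>u. (u::'a, 0::'b)) ` Basis \<inter> (\<lambda>u. (0::'a, u::'b)) ` Basis = {}"
    using nonzero_Basis by fastforce
  show ?thesis
    unfolding Basis_prod_def
    by (simp only: prod.union_disjoint[OF finite_imageI[OF finite_Basis] finite_imageI[OF finite_Basis] disj]
        prod.reindex[OF i1] prod.reindex[OF i2] o_def)
qed

lemma distr_Phi:
  "distr lborel borel (\<lambda>z::real^('p::finite + 'k::finite). (proj_x z, proj_x' z)) = (lborel :: ((real^'p) \<times> (real^'k)) measure)"
proof (rule lborel_eqI[symmetric])
  fix l u :: "(real^'p) \<times> (real^'k)"
  assume le: "\<And>b. b \<in> Basis \<Longrightarrow> l \<bullet> b \<le> u \<bullet> b"
  obtain la lb where l: "l = (la, lb)" by fastforce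
  obtain ua ub where u: "u = (ua, ub)" by fastforce
  have le1: "la $ i \<le> ua $ i" for i
  proof -
    have "(axis i 1, 0) \<in> (Basis :: ((real^'p) \<times> (real^'k)) set)"
      unfolding Basis_prod_def Basis_vec_def Basis_real_def by blast
    from le[OF this] show ?thesis by (simp add: l u cart_eq_inner_axis)
  qed
  have le2: "lb $ i \<le> ub $ i" for i
  proof -
    have "(0, axis i 1) \<in> (Basis :: ((real^'p) \<times> (real^'k)) set)"
      unfolding Basis_prod_def Basis_vec_def Basis_real_def by blast
    from le[OF this] show ?thesis by (simp add: l u cart_eq_inner_axis)
  qed
  define L :: "real^('p + 'k)" where "L = (\<chi> r. case r of Inl i \<Rightarrow> la $ i | Inr j \<Rightarrow> lb $ j)"
  define R :: "real^('p + 'k)" where "R = (\<chi> r. case r of Inl i \<Rightarrow> ua $ i | Inr j \<Rightarrow> ub $ j)"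
  have bx: "box (la, lb) (ua, ub) = box la ua \<times> box lb ub"
    by (auto simp: Basis_prod_def ball_Un box_def)
  have pre: "(\<lambda>z. (proj_x z, proj_x' z)) -` box l u = box L R"
  proof -
    have "z \<in> box L R \<longleftrightarrow> (\<forall>i. la $ i < z $ Inl i \<and> z $ Inl i < ua $ i) \<and> (\<forall>j. lb $ j < z $ Inr j \<and> z $ Inr j < ub $ j)" for z
      unfolding mem_box_cart L_def R_def by (auto split: sum.split)
    then show ?thesis
      by (auto simp: l u bx mem_box_cart proj_x_def proj_x'_def)
  qed
  have meas: "(\<lambda>z::real^('p + 'k). (proj_x z, proj_x' z)) \<in> borel_measurable borel"
    by (intro borel_measurable_continuous_onI continuous_intros linear_continuous_on linear_proj_x linear_proj_x')
  have "emeasure (distr lborel borel (\<lambda>z. (proj_x z, proj_x' z))) (box l u) = emeasure lborel (box L R)"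
    using meas by (subst emeasure_distr) (auto simp: pre)
  also have "\<dots> = ennreal (\<Prod>b\<in>Basis. (R - L) \<bullet> b)"
    by (rule emeasure_lborel_box) (auto simp: Basis_vec_def L_def R_def cart_eq_inner_axis[symmetric] le1 le2 split: sum.split)
  also have "(\<Prod>b\<in>Basis. (R - L) \<bullet> b) = (\<Prod>r\<in>UNIV. R $ r - L $ r)"
    by (simp add: prod_Basis_cart cart_eq_inner_axis[symmetric])
  also have "\<dots> = (\<Prod>i\<in>UNIV. ua $ i - la $ i) * (\<Prod>j\<in>UNIV. ub $ j - lb $ j)"
    by (simp add: UNIV_Plus_UNIV[symmetric] prod.Plus L_def R_def o_def del: UNIV_Plus_UNIV)
  also have "\<dots> = (\<Prod>b\<in>Basis. (u - l) \<bullet> b)"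
    by (simp add: prod_Basis_prod_eq prod_Basis_cart l u cart_eq_inner_axis[symmetric])
  finally show "emeasure (distr lborel borel (\<lambda>z. (proj_x z, proj_x' z))) (box l u) = ennreal (\<Prod>b\<in>Basis. (u - l) \<bullet> b)" .
qed simp

lemma nn_integral_proj:
  fixes F :: "real^'p::finite \<Rightarrow> ennreal" and A' :: "(real^'k::finite) set"
  assumes F: "F \<in> borel_measurable borel" and A': "A' \<in> sets borel"
  shows "(\<integral>\<^sup>+z. F (proj_x z) * indicator A' (proj_x' z) \<partial>(lborel :: (real^('p + 'k)) measure))
          = (\<integral>\<^sup>+x. F x \<partial>lborel) * emeasure lborel A'"
proof -
  let ?Phi = "\<lambda>z::real^('p + 'k). (proj_x z, proj_x' z)"
  let ?G = "\<lambda>w::(real^'p) \<times> (real^'k). F (fst w) * indicator A' (snd w)"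
  have meas: "?Phi \<in> borel_measurable borel"
    by (intro borel_measurable_continuous_onI continuous_intros linear_continuous_on linear_proj_x linear_proj_x')
  have G1: "(\<lambda>w::(real^'p) \<times> (real^'k). F (fst w)) \<in> borel_measurable borel"
    by (rule measurable_compose[OF borel_measurable_continuous_onI[OF continuous_on_fst[OF continuous_on_id]] F])
  have G2: "(\<lambda>w::(real^'p) \<times> (real^'k). indicator A' (snd w) :: ennreal) \<in> borel_measurable borel"
    by (rule measurable_compose[OF borel_measurable_continuous_onI[OF continuous_on_snd[OF continuous_on_id]]])
       (use A' in simp)
  have Gm: "?G \<in> borel_measurable borel"
    using G1 G2 by measurable
  have "(\<integral>\<^sup>+z. F (proj_x z) * indicator A' (proj_x' z) \<partial>lborel) = (\<integral>\<^sup>+z. ?G (?Phi z) \<partial>lborel)"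
    by simp
  also have "\<dots> = integral\<^sup>N (distr lborel borel ?Phi) ?G"
    by (rule nn_integral_distr[symmetric]) (use meas Gm in auto)
  also have "\<dots> = integral\<^sup>N (lborel \<Otimes>\<^sub>M lborel) ?G"
    by (simp add: distr_Phi lborel_prod)
  also have "\<dots> = (\<integral>\<^sup>+x. \<integral>\<^sup>+y. F x * indicator A' y \<partial>lborel \<partial>lborel)"
  proof -
    have "integral\<^sup>N (lborel \<Otimes>\<^sub>M lborel) ?G = (\<integral>\<^sup>+x. \<integral>\<^sup>+y. ?G (x, y) \<partial>lborel \<partial>lborel)"
      by (rule lborel.nn_integral_fst[symmetric]) (use Gm in \<open>simp add: lborel_prod\<close>)
    then show ?thesis by simp
  qed
  also have "\<dots> = (\<integral>\<^sup>+x. F x * emeasure lborel A' \<partial>lborel)"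
    using A' by (simp add: nn_integral_cmult_indicator)
  also have "\<dots> = (\<integral>\<^sup>+x. F x \<partial>lborel) * emeasure lborel A'"
    using F by (simp add: nn_integral_multc)
  finally show ?thesis .
qed

lemma integral_part:
  fixes g :: "real^'p::finite \<Rightarrow> real" and rho G :: "real^('p + 'k::finite) \<Rightarrow> real"
    and U :: "(real^'p) set" and U' :: "(real^'k) set"
  assumes U: "open U" and U': "open U'" "bounded U'"
    and Ut: "Ut = {z. proj_x z \<in> U \<and> proj_x' z \<in> U'}" "open Ut"
    and g: "continuous_on U g" and rho: "continuous_on Ut rho"
    and M0: "0 \<le> M" and rb: "\<And>z. z \<in> Ut \<Longrightarrow> 0 \<le> rho z \<and> rho z \<le> M"
    and gi: "set_integrable lborel U (\<lambda>x. (g x)\<^sup>2)"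
    and G: "\<And>z. z \<in> Ut \<Longrightarrow> G z = g (proj_x z)"
  shows "set_integrable lborel Ut (\<lambda>z. (G z)\<^sup>2 * rho z) \<and>
         (LINT z:Ut|lborel. (G z)\<^sup>2 * rho z) \<le> M * measure lborel U' * (LINT x:U|lborel. (g x)\<^sup>2)"
proof -
  define F where "F = (\<lambda>x. indicator U x * (g x)\<^sup>2)"
  have Fm: "F \<in> borel_measurable borel"
    using borel_measurable_continuous_on_indicator[of U "\<lambda>x. (g x)\<^sup>2"] U g
    by (auto simp: F_def intro!: continuous_intros)
  have F0: "0 \<le> F x" for x by (simp add: F_def)
  have Fi: "integrable lborel F"
    using gi unfolding set_integrable_def F_def by (simp add: mult.commute)
  have intF: "(\<integral>\<^sup>+x. ennreal (F x) \<partial>lborel) = ennreal (LINT x:U|lborel. (g x)\<^sup>2)"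
    using nn_integral_eq_integral[OF Fi] F0 unfolding set_lebesgue_integral_def F_def
    by (simp add: mult.commute)
  have emU': "emeasure lborel U' = ennreal (measure lborel U')"
    using emeasure_bounded_finite[OF U'(2)] by (simp add: emeasure_eq_ennreal_measure)
  have Lnn: "0 \<le> (LINT x:U|lborel. (g x)\<^sup>2)"
    unfolding set_lebesgue_integral_def by (rule integral_nonneg_AE) (auto simp: indicator_def)
  define q where "q = (\<lambda>z. indicator Ut z * (g (proj_x z))\<^sup>2)"
  have qF: "ennreal (q z) = ennreal (F (proj_x z)) * indicator U' (proj_x' z)" for z
    by (simp add: q_def F_def Ut indicator_def)
  have nnq: "(\<integral>\<^sup>+z. ennreal (q z) \<partial>lborel) = ennreal ((LINT x:U|lborel. (g x)\<^sup>2) * measure lborel U')"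
    unfolding qF
    by (subst nn_integral_proj) (use Fm U' in \<open>auto simp: intF emU' ennreal_mult' Lnn\<close>)
  have qm: "q \<in> borel_measurable borel"
  proof -
    have "continuous_on Ut (\<lambda>z. (g (proj_x z))\<^sup>2)"
      by (intro continuous_intros continuous_on_compose2[OF g] linear_continuous_on linear_proj_x)
         (auto simp: Ut)
    from borel_measurable_continuous_on_indicator[OF _ this] Ut(2) show ?thesis
      by (simp add: q_def)
  qed
  have qi: "integrable lborel q"
    by (rule integrableI_nonneg) (use qm nnq in \<open>auto simp: q_def\<close>)
  have intq: "integral\<^sup>L lborel q = (LINT x:U|lborel. (g x)\<^sup>2) * measure lborel U'"
    using integral_eq_nn_integral[of q lborel] qm nnq
    by (simp add: q_def Lnn measure_nonneg)
  define p where "p = (\<lambda>z. indicator Ut z *\<^sub>R ((G z)\<^sup>2 * rho z))"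
  have p_eq: "p = (\<lambda>z. indicator Ut z *\<^sub>R ((g (proj_x z))\<^sup>2 * rho z))"
    by (auto simp: p_def G indicator_def fun_eq_iff)
  have pm: "p \<in> borel_measurable lborel"
  proof -
    have "continuous_on Ut (\<lambda>z. (g (proj_x z))\<^sup>2 * rho z)"
      by (intro continuous_intros continuous_on_compose2[OF g] linear_continuous_on linear_proj_x rho)
         (auto simp: Ut)
    from borel_measurable_continuous_on_indicator[OF _ this] Ut(2) show ?thesis
      by (simp add: p_eq)
  qed
  have pq: "p z \<le> M * q z" "norm (p z) \<le> norm (M * q z)" for z
  proof -
    have "p z \<le> M * q z \<and> 0 \<le> p z"
    proof (cases "z \<in> Ut")
      case True
      then show ?thesis using rb[OF True] G[OF True]
        by (simp add: p_def q_def mult.commute mult_right_mono)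
    qed (simp add: p_def q_def)
    then show "p z \<le> M * q z" "norm (p z) \<le> norm (M * q z)" using M0 by auto
  qed
  have pi: "integrable lborel p"
    by (rule Bochner_Integration.integrable_bound[OF integrable_mult_right[OF qi] pm]) (use pq in auto)
  have "integral\<^sup>L lborel p \<le> integral\<^sup>L lborel (\<lambda>z. M * q z)"
    by (rule integral_mono) (use pi qi pq in auto)
  also have "\<dots> = M * measure lborel U' * (LINT x:U|lborel. (g x)\<^sup>2)"
    using intq by simp
  finally show ?thesis
    using pi unfolding set_integrable_def set_lebesgue_integral_def p_def by simp
qed

lemma smooth_imp_cont:
  assumes "smooth_on S f"
  shows "continuous_on S f"
  by (rule continuous_at_imp_continuous_on)
     (use smooth_onD(2)[OF assms] differentiable_imp_continuous_within in blast)

lemma Basis_cart_axis: "b \<in> (Basis :: (real^'n::finite) set) \<Longrightarrow> \<exists>r. b = axis r 1"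
  by (auto simp: Basis_vec_def)

lemma axis_in_Basis_cart: "axis r 1 \<in> (Basis :: (real^'n::finite) set)"
  by (auto simp: Basis_vec_def)

lemma proj_x_zero: "proj_x 0 = 0" "proj_x' 0 = 0"
  by (simp_all add: proj_x_def proj_x'_def vec_eq_iff)

lemma bounded_linear_L1: "bounded_linear (\<lambda>w::(real^('p::finite + 'k::finite)) \<times> (real^'q::finite). (proj_x (fst w), snd w))"
  by (intro bounded_linear_Pair bounded_linear_compose[OF linear_proj_x] bounded_linear_fst bounded_linear_snd)

lemma bounded_linear_L2: "bounded_linear (\<lambda>x::'a::real_normed_vector. (x, 0::'b::real_normed_vector))"
  by (intro bounded_linear_Pair bounded_linear_ident bounded_linear_zero)

theorem proposition3p8:
  fixes U :: "(real^'p::finite) set" and U' :: "(real^'k::finite) set" and T :: "(real^'q::finite) set"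
    and X :: "nat \<Rightarrow> real^'p \<Rightarrow> real^'q \<Rightarrow> real^'p"
    and u :: "nat \<Rightarrow> real^('p + 'k) \<Rightarrow> real^'q \<Rightarrow> real^'k"
    and d m :: nat
    and Js :: "'p + 'k \<Rightarrow> nat list"
    and W1 :: "((real^'p) \<times> (real^'q)) set" and W2 :: "((real^('p + 'k)) \<times> (real^'q)) set"
  defines "Ut \<equiv> {z :: real^('p + 'k). proj_x z \<in> U \<and> proj_x' z \<in> U'}"
  defines "Xt \<equiv> (\<lambda>y i. lift_field (X i) (u i) y)"
  assumes U: "open U" "(0::real^'p) \<in> U" "bounded U"
    and U': "open U'" "(0::real^'k) \<in> U'" "bounded U'"
    and T: "open T" "(0::real^'q) \<in> T" "bounded T"
    and W1: "closure U \<times> closure T \<subseteq> W1"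
    and X_smooth: "\<And>i. i < d \<Longrightarrow> smooth_on W1 (\<lambda>(x, y). X i x y)"
    and W2: "closure Ut \<times> closure T \<subseteq> W2"
    and u_smooth: "\<And>i. i < d \<Longrightarrow> smooth_on W2 (\<lambda>(z, y). u i z y)"
    and free: "free_nilpotent_dim d m = int CARD('p + 'k)"
    and span_all: "\<And>z y. z \<in> closure Ut \<Longrightarrow> y \<in> closure T \<Longrightarrow>
                      span {commutator (Xt y) J z | J. J \<in> tuples_upto d m} = UNIV"
    and Js_tuples: "\<And>c. Js c \<in> tuples_upto d m"
    and Js_gen: "\<And>i. i < d \<Longrightarrow> [i] \<in> range Js"
    and Js_basis: "\<And>z y. z \<in> closure Ut \<Longrightarrow> y \<in> closure T \<Longrightarrow>
                      det (frame_matrix (Xt y) Js z) \<noteq> 0"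
  shows "\<forall>k::nat. \<exists>C::real. \<forall>y\<in>T. \<forall>f::real^'p \<Rightarrow> real.
           (\<exists>V. closure U \<subseteq> V \<and> smooth_on V f) \<and>
           S2_mem (\<lambda>i x. X i x y) d k U (\<lambda>_. 1) f \<longrightarrow>
             S2_mem (Xt y) d k Ut (frame_density (Xt y) Js) (ext_op f) \<and>
             S2_norm (Xt y) d k Ut (frame_density (Xt y) Js) (ext_op f)
               \<le> C * S2_norm (\<lambda>i x. X i x y) d k U (\<lambda>_. 1) f"
proof -
  obtain c0 :: "'p + 'k" where True by simp
  have d0: "0 < d" using Js_tuples[of c0] by (cases "Js c0") (auto simp: tuples_upto_def)
  have oW1: "open W1" using smooth_onD(1)[OF X_smooth[OF d0]] .
  have oW2: "open W2" using smooth_onD(1)[OF u_smooth[OF d0]] .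
  have px: "bounded_linear (proj_x :: real^('p + 'k) \<Rightarrow> real^'p)" by (rule linear_proj_x)
  have px': "bounded_linear (proj_x' :: real^('p + 'k) \<Rightarrow> real^'k)" by (rule linear_proj_x')
  have Ut_eq: "Ut = proj_x -` U \<inter> proj_x' -` U'" by (auto simp: Ut_def)
  have oUt: "open Ut" unfolding Ut_eq
    by (intro open_Int open_vimage U'(1) U(1) linear_continuous_on px px')
  have bUt: "bounded Ut"
  proof -
    obtain B1 where B1: "\<And>x. x \<in> U \<Longrightarrow> norm x \<le> B1" using U(3) bounded_iff by metis
    obtain B2 where B2: "\<And>x. x \<in> U' \<Longrightarrow> norm x \<le> B2" using U'(3) bounded_iff by metis
    have B10: "0 \<le> B1" using B1[OF U(2)] by simp
    have B20: "0 \<le> B2" using B2[OF U'(2)] by simp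
    have "norm z \<le> real CARD('p + 'k) * (B1 + B2)" if z: "z \<in> Ut" for z
    proof -
      have "\<bar>z $ r\<bar> \<le> B1 + B2" for r
      proof (cases r)
        case (Inl l)
        have "\<bar>z $ r\<bar> = \<bar>proj_x z $ l\<bar>" by (simp add: Inl proj_x_def)
        also have "\<dots> \<le> norm (proj_x z)" by (rule component_le_norm_cart)
        also have "\<dots> \<le> B1" using B1 z by (auto simp: Ut_def)
        finally show ?thesis using B20 by simp
      next
        case (Inr j)
        have "\<bar>z $ r\<bar> = \<bar>proj_x' z $ j\<bar>" by (simp add: Inr proj_x'_def)
        also have "\<dots> \<le> norm (proj_x' z)" by (rule component_le_norm_cart)
        also have "\<dots> \<le> B2" using B2 z by (auto simp: Ut_def)
        finally show ?thesis using B10 by simp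
      qed
      then have "(\<Sum>r\<in>UNIV. \<bar>z $ r\<bar>) \<le> (\<Sum>r\<in>(UNIV::('p+'k) set). B1 + B2)"
        by (intro sum_mono) auto
      then show ?thesis using norm_le_l1_cart[of z] by simp
    qed
    then show ?thesis unfolding bounded_iff by blast
  qed
  define K where "K = closure Ut \<times> closure T"
  have cK: "compact K" unfolding K_def
    by (intro compact_Times compact_closure[THEN iffD2] bUt T(3))
  have zUt: "0 \<in> Ut" using U(2) U'(2) by (simp add: Ut_def proj_x_zero)
  have "(0, 0) \<in> K" unfolding K_def using closure_subset[of Ut] closure_subset[of T] zUt T(2) by auto
  then have Kne: "K \<noteq> {}" by auto
  have clx: "proj_x z \<in> closure U" if "z \<in> closure Ut" for z
  proof -
    have "proj_x ` closure Ut \<subseteq> closure U"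
      by (rule image_closure_subset) (auto intro: linear_continuous_on px closure_subset[THEN subsetD] simp: Ut_def)
    then show ?thesis using that by blast
  qed
  define W where "W = {w. (proj_x (fst w), snd w) \<in> W1} \<inter> W2"
  have oW: "open W"
  proof -
    have "continuous_on UNIV (\<lambda>w::(real^('p + 'k)) \<times> (real^'q). (proj_x (fst w), snd w))"
      by (rule linear_continuous_on[OF bounded_linear_L1])
    from open_vimage[OF oW1 this] show ?thesis unfolding W_def
      by (intro open_Int oW2) (simp add: vimage_def)
  qed
  have KW: "K \<subseteq> W" using W1 W2 clx unfolding K_def W_def by auto
  have Ys: "smooth_on W (\<lambda>w. Xt (snd w) i (fst w) \<bullet> b)" if i: "i < d" and b: "b \<in> Basis" for i b
  proof -
    obtain r where r: "b = axis r 1" using Basis_cart_axis[OF b] by blast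
    have eq: "Xt (snd w) i (fst w) \<bullet> b = Xt (snd w) i (fst w) $ r" for w
      by (simp add: r cart_eq_inner_axis)
    show ?thesis
    proof (cases r)
      case (Inl l)
      have s1: "smooth_on W1 (\<lambda>p. (case p of (x, y) \<Rightarrow> X i x y) $ l)"
        by (rule smooth_on_linear[OF bounded_linear_vec_nth X_smooth[OF i]])
      have s2: "smooth_on {w. (proj_x (fst w), snd w) + 0 \<in> W1}
          (\<lambda>w::(real^('p + 'k)) \<times> (real^'q). (case (proj_x (fst w), snd w) + 0 of (x, y) \<Rightarrow> X i x y) $ l)"
        by (rule smooth_on_affine[OF bounded_linear_L1 s1])
      have s3: "smooth_on W (\<lambda>w::(real^('p + 'k)) \<times> (real^'q). (case (proj_x (fst w), snd w) + 0 of (x, y) \<Rightarrow> X i x y) $ l)"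
        by (rule smooth_on_subset[OF s2 oW]) (auto simp: W_def)
      show ?thesis
        by (rule smooth_on_cong[OF s3]) (simp add: r cart_eq_inner_axis[symmetric] Inl Xt_def lift_field_def)
    next
      case (Inr j)
      have s1: "smooth_on W2 (\<lambda>p. (case p of (z, y) \<Rightarrow> u i z y) $ j)"
        by (rule smooth_on_linear[OF bounded_linear_vec_nth u_smooth[OF i]])
      have s3: "smooth_on W (\<lambda>p. (case p of (z, y) \<Rightarrow> u i z y) $ j)"
        by (rule smooth_on_subset[OF s1 oW]) (auto simp: W_def)
      show ?thesis
        by (rule smooth_on_cong[OF s3]) (simp add: r cart_eq_inner_axis[symmetric] Inr Xt_def lift_field_def split: prod.splits)
    qed
  qed
  have ex: "\<exists>H. smooth_on W H \<and> (\<forall>w\<in>W. frame_matrix (Xt (snd w)) Js (fst w) $ r $ c = H w)" for r c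
  proof -
    have J: "Js c \<noteq> []" "set (Js c) \<subseteq> {..<d}" using Js_tuples[of c] by (auto simp: tuples_upto_def)
    from commutator_rep[where Y=Xt, OF oW Ys J(1) J(2)] obtain H where
      H: "smooth_on W H" "\<forall>w\<in>W. commutator (Xt (snd w)) (Js c) (fst w) \<bullet> axis r 1 = H w"
      using axis_in_Basis_cart by blast
    then show ?thesis by (auto simp: frame_matrix_def cart_eq_inner_axis[symmetric])
  qed
  have HH: "\<exists>HH. \<forall>r c. smooth_on W (HH r c) \<and> (\<forall>w\<in>W. frame_matrix (Xt (snd w)) Js (fst w) $ r $ c = HH r c w)"
    by (rule exI[of _ "\<lambda>r c. SOME H. smooth_on W H \<and> (\<forall>w\<in>W. frame_matrix (Xt (snd w)) Js (fst w) $ r $ c = H w)"])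
       (use someI_ex[OF ex] in blast)
  then obtain HH where HH: "\<And>r c. smooth_on W (HH r c)"
    "\<And>r c w. w \<in> W \<Longrightarrow> frame_matrix (Xt (snd w)) Js (fst w) $ r $ c = HH r c w" by blast
  define DD where "DD = (\<lambda>w. det (frame_matrix (Xt (snd w)) Js (fst w)))"
  have contDD: "continuous_on W DD"
  proof -
    have "continuous_on W (\<lambda>w. \<Sum>p\<in>{p. p permutes (UNIV::('p+'k) set)}. of_int (sign p) * (\<Prod>i\<in>UNIV. HH i (p i) w))"
      by (intro continuous_intros smooth_imp_cont HH(1))
    then show ?thesis
      by (rule continuous_on_cong[THEN iffD1, rotated 2]) (simp_all add: DD_def det_def HH(2))
  qed
  obtain w0 where w0: "w0 \<in> K" "\<And>w. w \<in> K \<Longrightarrow> \<bar>DD w0\<bar> \<le> \<bar>DD w\<bar>"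
    using continuous_attains_inf[OF cK Kne, of "\<lambda>w. \<bar>DD w\<bar>"]
      continuous_on_subset[OF contDD KW] continuous_on_rabs by blast
  define M where "M = 1 / \<bar>DD w0\<bar>"
  have dpos: "0 < \<bar>DD w0\<bar>" using w0(1) Js_basis unfolding K_def DD_def by auto
  have M0: "0 \<le> M" using dpos by (simp add: M_def)
  have dens: "0 \<le> frame_density (Xt y) Js z \<and> frame_density (Xt y) Js z \<le> M"
    if zy: "z \<in> closure Ut" "y \<in> closure T" for z y
  proof -
    have K: "(z, y) \<in> K" using zy by (simp add: K_def)
    have fd: "frame_density (Xt y) Js z = 1 / \<bar>DD (z, y)\<bar>" by (simp add: frame_density_def DD_def)
    have "\<bar>DD w0\<bar> \<le> \<bar>DD (z, y)\<bar>" using w0(2)[OF K] .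
    then show ?thesis unfolding fd M_def using dpos by (simp add: frac_le)
  qed
  have dens_cont: "continuous_on Ut (frame_density (Xt y) Js)" if y: "y \<in> closure T" for y
  proof -
    have sub: "(\<lambda>z. (z, y)) ` Ut \<subseteq> W" using KW y closure_subset[of Ut] by (auto simp: K_def)
    have c1: "continuous_on Ut (\<lambda>z. DD (z, y))"
      by (rule continuous_on_compose2[OF contDD _ sub]) (intro continuous_intros)
    have nz: "DD (z, y) \<noteq> 0" if "z \<in> Ut" for z
      using Js_basis[of z y] that y closure_subset[of Ut] by (auto simp: DD_def)
    have "continuous_on Ut (\<lambda>z. 1 / \<bar>DD (z, y)\<bar>)"
      by (intro continuous_intros c1) (use nz in auto)
    moreover have "frame_density (Xt y) Js = (\<lambda>z. 1 / \<bar>DD (z, y)\<bar>)"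
      by (simp add: frame_density_def DD_def fun_eq_iff)
    ultimately show ?thesis by simp
  qed
  show ?thesis
  proof (intro allI exI[of _ "sqrt (M * measure lborel U')"] ballI impI)
    fix k :: nat and y and f :: "real^'p \<Rightarrow> real"
    assume y: "y \<in> T"
    assume prem: "(\<exists>V. closure U \<subseteq> V \<and> smooth_on V f) \<and> S2_mem (\<lambda>i x. X i x y) d k U (\<lambda>_. 1) f"
    then obtain V where V: "closure U \<subseteq> V" "smooth_on V f"
      and mem: "S2_mem (\<lambda>i x. X i x y) d k U (\<lambda>_. 1) f" by blast
    have yc: "y \<in> closure T" using y closure_subset by blast
    define Op where "Op = V \<inter> {x. (x, y) \<in> W1}"
    have oOp: "open Op" unfolding Op_def by (intro open_Int smooth_onD(1)[OF V(2)] open_slice oW1)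
    have UOp: "U \<subseteq> Op" using V(1) W1 yc closure_subset[of U] unfolding Op_def by auto
    have fOp: "smooth_on Op f" by (rule smooth_on_subset[OF V(2) oOp]) (auto simp: Op_def)
    have Xc: "smooth_on Op (\<lambda>x. X i x y \<bullet> b)" if i: "i < d" and b: "b \<in> Basis" for i b
    proof -
      have s1: "smooth_on W1 (\<lambda>p. (case p of (x, y) \<Rightarrow> X i x y) \<bullet> b)"
        by (rule smooth_on_linear[OF bounded_linear_inner_left X_smooth[OF i]])
      have s2: "smooth_on {x. (x, 0) + (0, y) \<in> W1} (\<lambda>x. (case (x, 0) + (0, y) of (x, y) \<Rightarrow> X i x y) \<bullet> b)"
        by (rule smooth_on_affine[OF bounded_linear_L2 s1])
      have s3: "smooth_on Op (\<lambda>x. (case (x, 0) + (0, y) of (x, y) \<Rightarrow> X i x y) \<bullet> b)"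
        by (rule smooth_on_subset[OF s2 oOp]) (auto simp: Op_def)
      show ?thesis by (rule smooth_on_cong[OF s3]) simp
    qed
    have VV: "proj_x (Xt y i z) = X i (proj_x z) y" for i z
      by (simp add: Xt_def lift_field_def proj_x_def vec_eq_iff)
    have Ef: "ext_op f = (\<lambda>z. f (proj_x z))" by (simp add: ext_op_def fun_eq_iff)
    have per: "set_integrable lborel Ut (\<lambda>z. (vf_word (Xt y) I (ext_op f) z)\<^sup>2 * frame_density (Xt y) Js z) \<and>
       (LINT z:Ut|lborel. (vf_word (Xt y) I (ext_op f) z)\<^sup>2 * frame_density (Xt y) Js z)
         \<le> M * measure lborel U' * (LINT x:U|lborel. (vf_word (\<lambda>i x. X i x y) I f x)\<^sup>2)"
      if I: "I \<in> words_upto d k" for I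
    proof -
      have Id: "set I \<subseteq> {..<d}" using I by (simp add: words_upto_def)
      have sg: "smooth_on Op (vf_word (\<lambda>i x. X i x y) I f)"
        by (rule smooth_on_vf_word[OF _ fOp Id]) (use Xc in simp)
      have pb: "\<forall>z\<in>Ut. vf_word (Xt y) I (\<lambda>z. f (proj_x z)) z = vf_word (\<lambda>i x. X i x y) I f (proj_x z)"
        by (rule vf_word_pullback[OF px oUt _ _ _ fOp Id]) (use UOp VV Xc in \<open>auto simp: Ut_def\<close>)
      show ?thesis
      proof (rule integral_part[where g="vf_word (\<lambda>i x. X i x y) I f" and G="vf_word (Xt y) I (ext_op f)"
            and rho="frame_density (Xt y) Js", OF U(1) U'(1) U'(3) Ut_def[THEN meta_eq_to_obj_eq] oUt _ dens_cont[OF yc] M0])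
        show "continuous_on U (vf_word (\<lambda>i x. X i x y) I f)"
          by (rule continuous_on_subset[OF smooth_imp_cont[OF sg] UOp])
        show "0 \<le> frame_density (Xt y) Js z \<and> frame_density (Xt y) Js z \<le> M" if "z \<in> Ut" for z
          using dens[OF _ yc] that closure_subset[of Ut] by blast
        show "set_integrable lborel U (\<lambda>x. (vf_word (\<lambda>i x. X i x y) I f x)\<^sup>2)"
          using mem I unfolding S2_mem_def by simp
        show "vf_word (Xt y) I (ext_op f) z = vf_word (\<lambda>i x. X i x y) I f (proj_x z)" if "z \<in> Ut" for z
          using pb that unfolding Ef by blast
      qed
    qed
    show "S2_mem (Xt y) d k Ut (frame_density (Xt y) Js) (ext_op f) \<and>
          S2_norm (Xt y) d k Ut (frame_density (Xt y) Js) (ext_op f)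
            \<le> sqrt (M * measure lborel U') * S2_norm (\<lambda>i x. X i x y) d k U (\<lambda>_. 1) f"
      unfolding S2_mem_def S2_norm_def
    proof
      show "\<forall>I\<in>words_upto d k. set_integrable lborel Ut (\<lambda>z. (vf_word (Xt y) I (ext_op f) z)\<^sup>2 * frame_density (Xt y) Js z)"
        using per by blast
      have "(\<Sum>I\<in>words_upto d k. sqrt (LINT z:Ut|lborel. (vf_word (Xt y) I (ext_op f) z)\<^sup>2 * frame_density (Xt y) Js z))
          \<le> (\<Sum>I\<in>words_upto d k. sqrt (M * measure lborel U') * sqrt (LINT x:U|lborel. (vf_word (\<lambda>i x. X i x y) I f x)\<^sup>2 * 1))"
      proof (rule sum_mono)
        fix I assume I: "I \<in> words_upto d k"
        have "sqrt (LINT z:Ut|lborel. (vf_word (Xt y) I (ext_op f) z)\<^sup>2 * frame_density (Xt y) Js z)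
            \<le> sqrt (M * measure lborel U' * (LINT x:U|lborel. (vf_word (\<lambda>i x. X i x y) I f x)\<^sup>2))"
          by (rule real_sqrt_le_mono) (use per[OF I] in simp)
        then show "sqrt (LINT z:Ut|lborel. (vf_word (Xt y) I (ext_op f) z)\<^sup>2 * frame_density (Xt y) Js z)
            \<le> sqrt (M * measure lborel U') * sqrt (LINT x:U|lborel. (vf_word (\<lambda>i x. X i x y) I f x)\<^sup>2 * 1)"
          by (simp add: real_sqrt_mult)
      qed
      then show "(\<Sum>I\<in>words_upto d k. sqrt (LINT z:Ut|lborel. (vf_word (Xt y) I (ext_op f) z)\<^sup>2 * frame_density (Xt y) Js z))
          \<le> sqrt (M * measure lborel U') * (\<Sum>I\<in>words_upto d k. sqrt (LINT x:U|lborel. (vf_word (\<lambda>i x. X i x y) I f x)\<^sup>2 * 1))"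
        by (simp add: sum_distrib_left)
    qed
  qed
qed

end
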